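(* Let $d\ge0$ and $n>d$ be integers, let $T\in L(n,d)$, let $T_1\in T$, and let $T'=T\setminus\{T_1\}$. Then $\mathcal{I}_{n,d}(\{T_1\})\times\mathcal{I}_{n,d}(T')$ and $\mathcal{I}_{n,d}(T)$ are isomorphic as posets.
   Context: For a finite set $X$ let $\operatorname{codim}_d(X)=d+1-|X|$. For a finite collection $\{T_1,\dots,T_l\}$ of pairwise distinct finite sets put $\rho_d(\{T_1,\dots,T_l\})=\sum_{i=1}^l\operatorname{codim}_d(T_i)$ (with $\rho_d(\emptyset)=0$) and $D_d(\{T_1,\dots,T_l\})=\operatorname{codim}_d(T_1\cap\cdots\cap T_l)-\rho_d(\{T_1,\dots,T_l\})$. For integers $d\ge0$, $n>d$, $L(n,d)$ is the set of all collections $T$ of subsets of $\{1,\dots,n\}$ such that (i) $D_d(T')>0$ for every $T'\subset T$ with $|T'|>1$, and (ii) $0\le|T_i|\le d$ for every $T_i\in T$. It is partially ordered by: $T<T'$ iff $\rho_d(T)<\rho_d(T')$ and for every $T_i\in T$ there exists $T'_j\in T'$ with $T'_j\subset T_i$; $T\le T'$ means $T<T'$ or $T=T'$. For $T\in L(n,d)$, $\mathcal{I}_{n,d}(T)=\{S\in L(n,d): S\le T\}$ with the induced order; products of posets carry the componentwise order. *)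

theory Defs
  imports Main
begin

definition codim :: "nat \<Rightarrow> nat set \<Rightarrow> int" where
  "codim d X = int d + 1 - int (card X)"

definition rho :: "nat \<Rightarrow> nat set set \<Rightarrow> int" where
  "rho d T = (\<Sum>X\<in>T. codim d X)"

definition Dd :: "nat \<Rightarrow> nat set set \<Rightarrow> int" where
  "Dd d T = codim d (\<Inter>T) - rho d T"

definition L :: "nat \<Rightarrow> nat \<Rightarrow> nat set set set" where
  "L n d = {T. T \<subseteq> Pow {1..n}
              \<and> (\<forall>T'. T' \<subseteq> T \<and> card T' > 1 \<longrightarrow> Dd d T' > 0)
              \<and> (\<forall>X\<in>T. card X \<le> d)}"

definition Lless :: "nat \<Rightarrow> nat set set \<Rightarrow> nat set set \<Rightarrow> bool" where
  "Lless d T T' \<longleftrightarrow> rho d T < rho d T' \<and> (\<forall>X\<in>T. \<exists>Y\<in>T'. Y \<subseteq> X)"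

definition Lle :: "nat \<Rightarrow> nat set set \<Rightarrow> nat set set \<Rightarrow> bool" where
  "Lle d T T' \<longleftrightarrow> Lless d T T' \<or> T = T'"

definition Ideal :: "nat \<Rightarrow> nat \<Rightarrow> nat set set \<Rightarrow> nat set set set" where
  "Ideal n d T = {S \<in> L n d. Lle d S T}"

definition poset_iso :: "'a set \<Rightarrow> ('a \<Rightarrow> 'a \<Rightarrow> bool) \<Rightarrow> 'b set \<Rightarrow> ('b \<Rightarrow> 'b \<Rightarrow> bool) \<Rightarrow> bool" where
  "poset_iso A leA B leB \<longleftrightarrow> (\<exists>f. bij_betw f A B \<and>
      (\<forall>x\<in>A. \<forall>y\<in>A. leA x y \<longleftrightarrow> leB (f x) (f y)))"

definition prod_le :: "('a \<Rightarrow> 'a \<Rightarrow> bool) \<Rightarrow> ('b \<Rightarrow> 'b \<Rightarrow> bool) \<Rightarrow> 'a \<times> 'b \<Rightarrow> 'a \<times> 'b \<Rightarrow> bool" where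
  "prod_le leA leB p q \<longleftrightarrow> leA (fst p) (fst q) \<and> leB (snd p) (snd q)"

end

theory Submission
  imports Defs
begin

definition over :: "nat set set \<Rightarrow> nat set set \<Rightarrow> bool" where
  "over S T \<longleftrightarrow> (\<forall>X\<in>S. \<exists>Y\<in>T. Y \<subseteq> X)"

lemma L_sub:
  assumes T: "T \<in> L n d" and ST: "S \<subseteq> T" shows "S \<in> L n d"
proof -
  have a: "T \<subseteq> Pow {1..n}" and b: "\<And>T'. T' \<subseteq> T \<Longrightarrow> card T' > 1 \<Longrightarrow> Dd d T' > 0"
    and c: "\<And>X. X \<in> T \<Longrightarrow> card X \<le> d"
    using T unfolding L_def by auto
  have "S \<subseteq> Pow {1..n}" using a ST by (rule subset_trans[rotated])
  moreover have "\<forall>T'. T' \<subseteq> S \<and> card T' > 1 \<longrightarrow> Dd d T' > 0"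
  proof (intro allI impI)
    fix T' assume "T' \<subseteq> S \<and> card T' > 1"
    then show "Dd d T' > 0" using b[of T'] ST by (meson subset_trans)
  qed
  moreover have "\<forall>X\<in>S. card X \<le> d" using c ST by (simp add: subset_iff)
  ultimately show ?thesis unfolding L_def by simp
qed

lemma L_fin: "T \<in> L n d \<Longrightarrow> finite T"
proof -
  assume "T \<in> L n d"
  then have "T \<subseteq> Pow {1..n}" unfolding L_def by simp
  then show "finite T" by (rule finite_subset) simp
qed

lemma L_elem: "T \<in> L n d \<Longrightarrow> X \<in> T \<Longrightarrow> finite X \<and> X \<subseteq> {1..n} \<and> card X \<le> d"
  unfolding L_def by (auto intro: finite_subset)

lemma L_D: "T \<in> L n d \<Longrightarrow> U \<subseteq> T \<Longrightarrow> card U > 1 \<Longrightarrow> rho d U < codim d (\<Inter>U)"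
  unfolding L_def Dd_def by auto

lemma codim_mono: "finite B \<Longrightarrow> A \<subseteq> B \<Longrightarrow> codim d B \<le> codim d A"
  unfolding codim_def using card_mono by fastforce

lemma codim_pos: "card X \<le> d \<Longrightarrow> codim d X \<ge> 1"
  unfolding codim_def by simp

lemma uniq:
  assumes T: "T \<in> L n d" and "Y1 \<in> T" "Y2 \<in> T" "Y1 \<noteq> Y2" "Y1 \<subseteq> X" "Y2 \<subseteq> X" "finite X"
  shows "d < card X"
proof -
  have f1: "finite Y1" and f2: "finite Y2" using L_elem[OF T] assms by auto
  have "card {Y1, Y2} = 2" using assms by simp
  then have "rho d {Y1,Y2} < codim d (\<Inter>{Y1,Y2})"
    using L_D[OF T, of "{Y1,Y2}"] assms by auto
  then have "codim d Y1 + codim d Y2 < codim d (Y1 \<inter> Y2)"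
    using assms unfolding rho_def by simp
  then have "int (card Y1) + int (card Y2) > int d + 1 + int (card (Y1 \<inter> Y2))"
    unfolding codim_def by simp
  moreover have "card Y1 + card Y2 = card (Y1 \<union> Y2) + card (Y1 \<inter> Y2)"
    using card_Un_Int[OF f1 f2] .
  moreover have "card (Y1 \<union> Y2) \<le> card X"
    using assms by (intro card_mono) auto
  ultimately show ?thesis by linarith
qed

lemma rho_le_Inter:
  assumes V: "V \<in> L n d" and ne: "V \<noteq> {}"
  shows "rho d V \<le> codim d (\<Inter>V) \<and> (card V > 1 \<longrightarrow> rho d V < codim d (\<Inter>V))"
proof -
  have fV: "finite V" using L_fin[OF V] .
  have "card V \<ge> 1" using fV ne by (simp add: Suc_leI card_gt_0_iff)
  then consider "card V = 1" | "card V > 1" by linarith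
  then show ?thesis
  proof cases
    case 1
    then obtain X where "V = {X}" by (meson card_1_singletonE)
    then show ?thesis unfolding rho_def by simp
  next
    case 2
    then show ?thesis using L_D[OF V, of V] by auto
  qed
qed

lemma sum_part:
  assumes fS: "finite S" and fT: "finite T" and u: "\<forall>X\<in>S. \<exists>!Y. Y \<in> T \<and> Y \<subseteq> X"
  shows "sum f S = (\<Sum>Y\<in>T. sum f {X\<in>S. Y \<subseteq> X})"
proof -
  have e: "S = (\<Union>Y\<in>T. {X\<in>S. Y \<subseteq> X})"
  proof
    show "S \<subseteq> (\<Union>Y\<in>T. {X\<in>S. Y \<subseteq> X})"
    proof
      fix X assume X: "X \<in> S"
      then obtain Y where "Y \<in> T" "Y \<subseteq> X" using u by auto
      then show "X \<in> (\<Union>Y\<in>T. {X\<in>S. Y \<subseteq> X})" using X by auto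
    qed
  qed auto
  have d: "\<forall>i\<in>T. \<forall>j\<in>T. i \<noteq> j \<longrightarrow> {X\<in>S. i \<subseteq> X} \<inter> {X\<in>S. j \<subseteq> X} = {}"
  proof (intro ballI impI)
    fix i j assume i: "i \<in> T" and j: "j \<in> T" and ij: "i \<noteq> j"
    show "{X\<in>S. i \<subseteq> X} \<inter> {X\<in>S. j \<subseteq> X} = {}"
    proof (rule ccontr)
      assume "{X\<in>S. i \<subseteq> X} \<inter> {X\<in>S. j \<subseteq> X} \<noteq> {}"
      then obtain X where X: "X \<in> S" "i \<subseteq> X" "j \<subseteq> X" by auto
      have "\<exists>!Y. Y \<in> T \<and> Y \<subseteq> X" using u X(1) by simp
      then obtain Y0 where "\<forall>y. y \<in> T \<and> y \<subseteq> X \<longrightarrow> y = Y0" by (auto simp: Ex1_def)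
      then have "i = Y0" "j = Y0" using i j X(2,3) by blast+
      then show False using ij by simp
    qed
  qed
  have "sum f (\<Union>Y\<in>T. {X\<in>S. Y \<subseteq> X}) = (\<Sum>Y\<in>T. sum f {X\<in>S. Y \<subseteq> X})"
    by (rule sum.UNION_disjoint[OF fT _ d]) (use fS in simp)
  then show ?thesis using e by simp
qed

lemma uniq_ex:
  assumes T: "T \<in> L n d" and S: "S \<in> L n d" and ov: "over S T"
  shows "\<forall>X\<in>S. \<exists>!Y. Y \<in> T \<and> Y \<subseteq> X"
proof
  fix X assume X: "X \<in> S"
  obtain Y where Y: "Y \<in> T" "Y \<subseteq> X" using ov X unfolding over_def by blast
  have fX: "finite X" and cX: "card X \<le> d" using L_elem[OF S X] by auto
  show "\<exists>!Y. Y \<in> T \<and> Y \<subseteq> X"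
  proof (rule ex1I[of _ Y])
    show "Y \<in> T \<and> Y \<subseteq> X" using Y by simp
    fix Y' assume "Y' \<in> T \<and> Y' \<subseteq> X"
    then show "Y' = Y" using uniq[OF T _ Y(1) _ _ Y(2) fX, of Y'] cX by force
  qed
qed

lemma K:
  assumes S: "S \<in> L n d" and T: "T \<in> L n d" and ov: "over S T"
  shows "rho d S \<le> rho d T \<and> (rho d S = rho d T \<longrightarrow> S = T)"
proof -
  define V where "V Y = {X\<in>S. Y \<subseteq> X}" for Y
  have fS: "finite S" and fT: "finite T" using L_fin S T by auto
  have dec: "rho d S = (\<Sum>Y\<in>T. rho d (V Y))"
    unfolding rho_def V_def using sum_part[OF fS fT uniq_ex[OF T S ov]] by simp
  have VL: "V Y \<in> L n d" for Y using L_sub[OF S] unfolding V_def by auto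
  have le: "rho d (V Y) \<le> codim d Y \<and> (rho d (V Y) = codim d Y \<longrightarrow> V Y = {Y})"
    if Y: "Y \<in> T" for Y
  proof (cases "V Y = {}")
    case True
    then show ?thesis using codim_pos[of Y d] L_elem[OF T Y] unfolding rho_def by auto
  next
    case False
    then obtain X0 where X0: "X0 \<in> V Y" by auto
    have fin: "finite (\<Inter>(V Y))"
      using X0 L_elem[OF VL X0] by (meson Inter_lower finite_subset)
    have sub: "Y \<subseteq> \<Inter>(V Y)" unfolding V_def by auto
    have cm: "codim d (\<Inter>(V Y)) \<le> codim d Y" using codim_mono[OF fin sub] .
    have r: "rho d (V Y) \<le> codim d (\<Inter>(V Y)) \<and> (card (V Y) > 1 \<longrightarrow> rho d (V Y) < codim d (\<Inter>(V Y)))"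
      using rho_le_Inter[OF VL False] .
    show ?thesis
    proof (intro conjI impI)
      show "rho d (V Y) \<le> codim d Y" using r cm by linarith
    next
      assume eq: "rho d (V Y) = codim d Y"
      have "\<not> card (V Y) > 1" using r cm eq by linarith
      moreover have "card (V Y) \<ge> 1" using False L_fin[OF VL]
        by (simp add: Suc_leI card_gt_0_iff)
      ultimately have "card (V Y) = 1" by linarith
      then obtain X where VX: "V Y = {X}" by (meson card_1_singletonE)
      then have "X \<in> S" "Y \<subseteq> X" unfolding V_def by auto
      then have fX: "finite X" using L_elem[OF S] by auto
      have "codim d X = codim d Y" using eq VX unfolding rho_def by simp
      then have "card Y = card X" unfolding codim_def by simp
      then have "Y = X" using card_subset_eq[OF fX \<open>Y \<subseteq> X\<close>] by simp
      then show "V Y = {Y}" using VX by simp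
    qed
  qed
  have "rho d S \<le> rho d T"
    unfolding dec by (unfold rho_def[of d T]) (rule sum_mono, use le in auto)
  moreover have "S = T" if eq: "rho d S = rho d T"
  proof -
    have all: "\<forall>Y\<in>T. rho d (V Y) = codim d Y"
    proof (rule ccontr)
      assume "\<not> (\<forall>Y\<in>T. rho d (V Y) = codim d Y)"
      then obtain Y where "Y \<in> T" "rho d (V Y) < codim d Y" using le by force
      then have "(\<Sum>Y\<in>T. rho d (V Y)) < (\<Sum>Y\<in>T. codim d Y)"
        using le by (intro sum_strict_mono_ex1[OF fT]) auto
      then show False using eq dec unfolding rho_def[of d T] by simp
    qed
    then have VY: "\<forall>Y\<in>T. V Y = {Y}" using le by blast
    show "S = T"
    proof
      show "S \<subseteq> T"
      proof
        fix X assume X: "X \<in> S"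
        then obtain Y where Y: "Y \<in> T" "Y \<subseteq> X" using ov unfolding over_def by blast
        then have "X \<in> V Y" using X unfolding V_def by auto
        then show "X \<in> T" using VY Y by auto
      qed
    next
      show "T \<subseteq> S"
      proof
        fix Y assume "Y \<in> T"
        then have "Y \<in> V Y" using VY by auto
        then show "Y \<in> S" unfolding V_def by auto
      qed
    qed
  qed
  ultimately show ?thesis by blast
qed

lemma Lle_iff:
  assumes S: "S \<in> L n d" and T: "T \<in> L n d"
  shows "Lle d S T \<longleftrightarrow> over S T"
proof
  assume "Lle d S T" then show "over S T"
    unfolding Lle_def Lless_def over_def by auto
next
  assume ov: "over S T"
  show "Lle d S T"
  proof (cases "S = T")
    case True then show ?thesis unfolding Lle_def by simp
  next
    case False
    then have "rho d S < rho d T" using K[OF S T ov] by auto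
    then show ?thesis using ov unfolding Lle_def Lless_def over_def by auto
  qed
qed

lemma Ideal_char: "T \<in> L n d \<Longrightarrow> Ideal n d T = {S \<in> L n d. over S T}"
  unfolding Ideal_def using Lle_iff by blast


lemma C:
  assumes T: "T \<in> L n d" and SP: "S \<subseteq> Pow {1..n}" and Sc: "\<forall>X\<in>S. card X \<le> d"
    and ov: "over S T" and grp: "\<forall>Y\<in>T. {X\<in>S. Y \<subseteq> X} \<in> L n d"
  shows "S \<in> L n d"
proof -
  have fS: "finite S" using SP by (rule finite_subset) simp
  have fT: "finite T" using L_fin[OF T] .
  have finX: "finite X" if XS: "X \<in> S" for X
  proof -
    have "X \<subseteq> {1..n}" using SP XS by blast
    then show ?thesis by (rule finite_subset) simp
  qed
  have un: "\<exists>!Y. Y \<in> T \<and> Y \<subseteq> X" if X: "X \<in> S" for X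
  proof -
    obtain Y where "Y \<in> T" "Y \<subseteq> X" using ov X unfolding over_def by blast
    then show ?thesis
    proof (intro ex1I[of _ Y])
      fix Y' assume "Y' \<in> T \<and> Y' \<subseteq> X"
      then show "Y' = Y" using uniq[OF T _ \<open>Y \<in> T\<close> _ _ \<open>Y \<subseteq> X\<close> finX[OF X], of Y'] Sc X by force
    qed simp
  qed
  have "rho d U < codim d (\<Inter>U)" if U: "U \<subseteq> S" "card U > 1" for U
  proof -
    have fU: "finite U" using U(1) fS by (rule finite_subset)
    define J where "J = {Y\<in>T. \<exists>X\<in>U. Y \<subseteq> X}"
    define UY where "UY Y = {X\<in>U. Y \<subseteq> X}" for Y
    define A where "A Y = \<Inter>(UY Y)" for Y
    have fJ: "finite J" using fT unfolding J_def by simp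
    have JT: "J \<subseteq> T" unfolding J_def by auto
    have Une: "U \<noteq> {}" using U by auto
    have unJ: "\<forall>X\<in>U. \<exists>!Y. Y \<in> J \<and> Y \<subseteq> X"
    proof
      fix X assume X: "X \<in> U"
      then obtain Y where Y: "Y \<in> T" "Y \<subseteq> X" using un U by blast
      then have "Y \<in> J" using X unfolding J_def by auto
      show "\<exists>!Y. Y \<in> J \<and> Y \<subseteq> X"
      proof (rule ex1I[of _ Y])
        show "Y \<in> J \<and> Y \<subseteq> X" using \<open>Y \<in> J\<close> Y by simp
        fix Y' assume "Y' \<in> J \<and> Y' \<subseteq> X"
        then have "Y' \<in> T \<and> Y' \<subseteq> X" using JT by blast
        moreover have "X \<in> S" using X U by blast
        moreover obtain Y0 where "\<forall>y. y \<in> T \<and> y \<subseteq> X \<longrightarrow> y = Y0"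
          using un[OF \<open>X \<in> S\<close>] by (auto simp: Ex1_def)
        ultimately have "Y' = Y0" "Y = Y0" using Y by blast+
        then show "Y' = Y" by simp
      qed
    qed
    have Jne: "J \<noteq> {}"
    proof -
      obtain X where X: "X \<in> U" using Une by auto
      from ex1_implies_ex[OF bspec[OF unJ X]] obtain Y where "Y \<in> J" by blast
      then show ?thesis by auto
    qed
    have UYL: "UY Y \<in> L n d" if YJ: "Y \<in> J" for Y
    proof (rule L_sub)
      show "{X\<in>S. Y \<subseteq> X} \<in> L n d" using grp JT YJ by blast
      show "UY Y \<subseteq> {X\<in>S. Y \<subseteq> X}" using U(1) unfolding UY_def by blast
    qed
    have UYne: "UY Y \<noteq> {}" if "Y \<in> J" for Y using that unfolding J_def UY_def by auto
    have dec: "rho d U = (\<Sum>Y\<in>J. rho d (UY Y))"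
      unfolding rho_def UY_def using sum_part[OF fU fJ unJ] by simp
    have "card J \<ge> 1" using fJ Jne by (simp add: Suc_leI card_gt_0_iff)
    then consider "card J = 1" | "card J > 1" by linarith
    then show ?thesis
    proof cases
      case 1
      then obtain Y where JY: "J = {Y}" by (meson card_1_singletonE)
      have "U = UY Y"
      proof
        show "U \<subseteq> UY Y"
        proof
          fix X assume X: "X \<in> U"
          from ex1_implies_ex[OF bspec[OF unJ X]] obtain Y' where Y': "Y' \<in> J" "Y' \<subseteq> X" by blast
          have "Y' = Y" using Y'(1) JY by simp
          then show "X \<in> UY Y" using X Y'(2) unfolding UY_def by simp
        qed
      qed (auto simp: UY_def)
      moreover have "UY Y \<in> L n d" using UYL JY by auto
      ultimately have "U \<in> L n d" by simp
      then show ?thesis using L_D[of U n d U] U(2) by simp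
    next
      case 2
      have DJ: "rho d J < codim d (\<Inter>J)" using L_D[OF T JT 2] .
      have finA: "finite (A Y)" and YA: "Y \<subseteq> A Y" if YJ: "Y \<in> J" for Y
      proof -
        obtain X where X: "X \<in> UY Y" using UYne[OF YJ] by auto
        then have "X \<in> S" using U unfolding UY_def by auto
        then have "finite X" using finX[of X] by simp
        moreover have "A Y \<subseteq> X" using X unfolding A_def by auto
        ultimately show "finite (A Y)" by (rule finite_subset[rotated])
        show "Y \<subseteq> A Y" unfolding A_def UY_def by auto
      qed
      have finY: "finite Y" if YJ: "Y \<in> J" for Y using YA[OF YJ] finA[OF YJ] by (rule finite_subset)
      have eqI: "\<Inter>U = (\<Inter>Y\<in>J. A Y)"
      proof
        show "\<Inter>U \<subseteq> (\<Inter>Y\<in>J. A Y)" unfolding A_def UY_def by auto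
        show "(\<Inter>Y\<in>J. A Y) \<subseteq> \<Inter>U"
        proof
          fix x assume x: "x \<in> (\<Inter>Y\<in>J. A Y)"
          show "x \<in> \<Inter>U"
          proof
            fix X assume X: "X \<in> U"
            from ex1_implies_ex[OF bspec[OF unJ X]] obtain Y where "Y \<in> J" "Y \<subseteq> X" by blast
            then have "X \<in> UY Y" using X unfolding UY_def by auto
            then show "x \<in> X" using x \<open>Y \<in> J\<close> unfolding A_def by auto
          qed
        qed
      qed
      have incl: "(\<Inter>Y\<in>J. A Y) \<subseteq> \<Inter>J \<union> (\<Union>Y\<in>J. A Y - Y)" by blast
      obtain Y0 where Y0: "Y0 \<in> J" using Jne by auto
      have "\<Inter>J \<subseteq> Y0" using Y0 by (rule Inter_lower)
      then have finIJ: "finite (\<Inter>J)" using finY[OF Y0] by (rule finite_subset)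
      have finU: "finite (\<Union>Y\<in>J. A Y - Y)" using fJ finA by auto
      have c0: "card (\<Inter>U) \<le> card (\<Inter>J \<union> (\<Union>Y\<in>J. A Y - Y))"
        unfolding eqI by (rule card_mono[OF finite_UnI[OF finIJ finU] incl])
      have c2: "card (\<Inter>J \<union> (\<Union>Y\<in>J. A Y - Y)) \<le> card (\<Inter>J) + card (\<Union>Y\<in>J. A Y - Y)"
        by (rule card_Un_le)
      have c3: "card (\<Union>Y\<in>J. A Y - Y) \<le> (\<Sum>Y\<in>J. card (A Y - Y))" by (rule card_UN_le[OF fJ])
      have "card (\<Inter>U) \<le> card (\<Inter>J) + (\<Sum>Y\<in>J. card (A Y - Y))" using c0 c2 c3 by linarith
      then have "int (card (\<Inter>U)) \<le> int (card (\<Inter>J)) + int (\<Sum>Y\<in>J. card (A Y - Y))" by linarith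
      then have c1: "int (card (\<Inter>U)) \<le> int (card (\<Inter>J)) + (\<Sum>Y\<in>J. int (card (A Y - Y)))"
        by (simp only: of_nat_sum)
      have cA: "codim d (A Y) = codim d Y - int (card (A Y - Y))" if "Y \<in> J" for Y
      proof -
        have "A Y = Y \<union> (A Y - Y)" using YA[OF that] by auto
        moreover have "card (Y \<union> (A Y - Y)) = card Y + card (A Y - Y)"
          by (rule card_Un_disjoint) (use finY[OF that] finA[OF that] in auto)
        ultimately have "card (A Y) = card Y + card (A Y - Y)" by simp
        then show ?thesis unfolding codim_def by simp
      qed
      have rA: "rho d (UY Y) \<le> codim d (A Y)" if "Y \<in> J" for Y
        using rho_le_Inter[OF UYL[OF that] UYne[OF that]] unfolding A_def by simp
      have "rho d U \<le> (\<Sum>Y\<in>J. codim d (A Y))" unfolding dec by (rule sum_mono) (use rA in auto)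
      also have "\<dots> = (\<Sum>Y\<in>J. codim d Y - int (card (A Y - Y)))" by (rule sum.cong) (use cA in auto)
      also have "\<dots> = rho d J - (\<Sum>Y\<in>J. int (card (A Y - Y)))"
        unfolding rho_def by (simp add: sum_subtractf)
      also have "\<dots> < codim d (\<Inter>J) - (\<Sum>Y\<in>J. int (card (A Y - Y)))" using DJ by simp
      also have "\<dots> \<le> codim d (\<Inter>U)" using c1 unfolding codim_def by simp
      finally show ?thesis .
    qed
  qed
  then have "\<forall>U. U \<subseteq> S \<and> card U > 1 \<longrightarrow> Dd d U > 0" unfolding Dd_def by auto
  then show ?thesis unfolding L_def using SP Sc by simp
qed

theorem lemma3p6:
  fixes n d :: nat and T :: "nat set set" and T1 :: "nat set"
  assumes "n > d" and "T \<in> L n d" and "T1 \<in> T"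
  shows "poset_iso (Ideal n d {T1} \<times> Ideal n d (T - {T1})) (prod_le (Lle d) (Lle d))
                   (Ideal n d T) (Lle d)"
proof -
  note T = assms(2)
  have L1: "{T1} \<in> L n d" by (rule L_sub[OF T]) (use assms(3) in auto)
  have L2: "T - {T1} \<in> L n d" by (rule L_sub[OF T]) auto
  have I1: "Ideal n d {T1} = {S \<in> L n d. over S {T1}}" using Ideal_char[OF L1] .
  have I2: "Ideal n d (T - {T1}) = {S \<in> L n d. over S (T - {T1})}" using Ideal_char[OF L2] .
  have I: "Ideal n d T = {S \<in> L n d. over S T}" using Ideal_char[OF T] .
  have sep: False if "finite X" "card X \<le> d" "T1 \<subseteq> X" "Z \<in> T - {T1}" "Z \<subseteq> X" for X Z
    using uniq[OF T assms(3), of Z X] that by auto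
  define f where "f = (\<lambda>p::nat set set \<times> nat set set. fst p \<union> snd p)"
  define A where "A = Ideal n d {T1} \<times> Ideal n d (T - {T1})"
  have memA: "S1 \<in> L n d \<and> S2 \<in> L n d \<and> (\<forall>X\<in>S1. T1 \<subseteq> X) \<and> over S2 (T - {T1})"
    if "(S1, S2) \<in> A" for S1 S2
    using that unfolding A_def I1 I2 over_def by auto
  have part: "S1 = {X \<in> S1 \<union> S2. T1 \<subseteq> X} \<and> S2 = {X \<in> S1 \<union> S2. \<not> T1 \<subseteq> X}"
    if "(S1, S2) \<in> A" for S1 S2
  proof -
    note m = memA[OF that]
    have "\<not> T1 \<subseteq> X" if "X \<in> S2" for X
    proof
      assume "T1 \<subseteq> X"
      obtain Z where "Z \<in> T - {T1}" "Z \<subseteq> X" using m \<open>X \<in> S2\<close> unfolding over_def by blast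
      then show False using sep[of X Z] L_elem[of S2 n d X] m \<open>X \<in> S2\<close> \<open>T1 \<subseteq> X\<close> by auto
    qed
    then show ?thesis using m by auto
  qed
  have imgL: "S1 \<union> S2 \<in> L n d" if "(S1, S2) \<in> A" for S1 S2
  proof -
    note m = memA[OF that]
    note p = part[OF that]
    have ne2: "\<not> T1 \<subseteq> X" if "X \<in> S2" for X using p that by blast
    show ?thesis
    proof (rule C[OF T])
      show "S1 \<union> S2 \<subseteq> Pow {1..n}"
      proof
        fix X assume "X \<in> S1 \<union> S2"
        then show "X \<in> Pow {1..n}" using L_elem[of S1 n d X] L_elem[of S2 n d X] m by auto
      qed
      show "\<forall>X\<in>S1 \<union> S2. card X \<le> d"
      proof
        fix X assume "X \<in> S1 \<union> S2"
        then show "card X \<le> d" using L_elem[of S1 n d X] L_elem[of S2 n d X] m by auto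
      qed
      show "over (S1 \<union> S2) T" using m assms(3) unfolding over_def by blast
      show "\<forall>Y\<in>T. {X \<in> S1 \<union> S2. Y \<subseteq> X} \<in> L n d"
      proof
        fix Y assume Y: "Y \<in> T"
        show "{X \<in> S1 \<union> S2. Y \<subseteq> X} \<in> L n d"
        proof (cases "Y = T1")
          case True
          then have "{X \<in> S1 \<union> S2. Y \<subseteq> X} \<subseteq> S1" using ne2 by auto
          then show ?thesis using L_sub[of S1 n d] m by simp
        next
          case False
          have "{X \<in> S1 \<union> S2. Y \<subseteq> X} \<subseteq> S2"
          proof
            fix X assume X: "X \<in> {X \<in> S1 \<union> S2. Y \<subseteq> X}"
            show "X \<in> S2"
            proof (rule ccontr)
              assume "X \<notin> S2"
              then have "X \<in> S1" "Y \<subseteq> X" using X by auto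
              then show False using sep[of X Y] L_elem[of S1 n d X] m Y False by auto
            qed
          qed
          then show ?thesis using L_sub[of S2 n d] m by simp
        qed
      qed
    qed
  qed
  have img: "f ` A = Ideal n d T"
  proof
    show "f ` A \<subseteq> Ideal n d T"
    proof
      fix S assume "S \<in> f ` A"
      then obtain S1 S2 where SA: "(S1, S2) \<in> A" and S: "S = S1 \<union> S2" unfolding f_def by auto
      note m = memA[OF SA]
      have "over S T" using m assms(3) unfolding S over_def by blast
      then show "S \<in> Ideal n d T" unfolding I using imgL[OF SA] S by auto
    qed
  next
    show "Ideal n d T \<subseteq> f ` A"
    proof
      fix S assume "S \<in> Ideal n d T"
      then have SL: "S \<in> L n d" and ov: "over S T" unfolding I by auto
      define S1 where "S1 = {X \<in> S. T1 \<subseteq> X}"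
      define S2 where "S2 = {X \<in> S. \<not> T1 \<subseteq> X}"
      have "S1 \<in> L n d" unfolding S1_def by (rule L_sub[OF SL]) auto
      then have "S1 \<in> Ideal n d {T1}" unfolding I1 S1_def over_def by auto
      moreover have "S2 \<in> L n d" unfolding S2_def by (rule L_sub[OF SL]) auto
      moreover have "over S2 (T - {T1})" unfolding over_def
      proof
        fix X assume X: "X \<in> S2"
        then have "X \<in> S" "\<not> T1 \<subseteq> X" unfolding S2_def by auto
        then obtain Y where "Y \<in> T" "Y \<subseteq> X" using ov unfolding over_def by blast
        then show "\<exists>Y\<in>T - {T1}. Y \<subseteq> X" using \<open>\<not> T1 \<subseteq> X\<close> by blast
      qed
      ultimately have "S1 \<in> Ideal n d {T1}" "S2 \<in> Ideal n d (T - {T1})" unfolding I2 by auto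
      moreover have "S = f (S1, S2)" unfolding f_def S1_def S2_def by auto
      ultimately show "S \<in> f ` A" unfolding A_def by auto
    qed
  qed
  have inj: "inj_on f A"
  proof (rule inj_onI)
    fix p q assume p: "p \<in> A" and q: "q \<in> A" and e: "f p = f q"
    obtain S1 S2 where pp: "p = (S1, S2)" by (cases p)
    obtain R1 R2 where qq: "q = (R1, R2)" by (cases q)
    have "S1 \<union> S2 = R1 \<union> R2" using e unfolding pp qq f_def by simp
    note eq = this
    have s: "S1 = {X \<in> S1 \<union> S2. T1 \<subseteq> X}" "S2 = {X \<in> S1 \<union> S2. \<not> T1 \<subseteq> X}"
      using part[of S1 S2] p unfolding pp by auto
    have r: "{X \<in> R1 \<union> R2. T1 \<subseteq> X} = R1" "{X \<in> R1 \<union> R2. \<not> T1 \<subseteq> X} = R2"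
      using part[of R1 R2] q unfolding qq by auto
    have "S1 = R1" using s(1) r(1) eq by (simp only:)
    moreover have "S2 = R2" using s(2) r(2) eq by (simp only:)
    ultimately show "p = q" unfolding pp qq by simp
  qed
  have ord: "prod_le (Lle d) (Lle d) p q \<longleftrightarrow> Lle d (f p) (f q)" if p: "p \<in> A" and q: "q \<in> A" for p q
  proof -
    obtain S1 S2 where pp: "p = (S1, S2)" by (cases p)
    obtain R1 R2 where qq: "q = (R1, R2)" by (cases q)
    note mS = memA[of S1 S2] and mR = memA[of R1 R2]
    have pA: "(S1, S2) \<in> A" and qA: "(R1, R2) \<in> A" using p q pp qq by auto
    note ms = memA[OF pA] and mr = memA[OF qA]
    have "prod_le (Lle d) (Lle d) p q \<longleftrightarrow> over S1 R1 \<and> over S2 R2"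
      unfolding pp qq prod_le_def using Lle_iff[of S1 n d R1] Lle_iff[of S2 n d R2] ms mr by simp
    also have "\<dots> \<longleftrightarrow> over (S1 \<union> S2) (R1 \<union> R2)"
    proof
      assume "over S1 R1 \<and> over S2 R2" then show "over (S1 \<union> S2) (R1 \<union> R2)"
        unfolding over_def by blast
    next
      assume ov: "over (S1 \<union> S2) (R1 \<union> R2)"
      have "over S1 R1"
        unfolding over_def
      proof
        fix X assume X: "X \<in> S1"
        then obtain Y where Y: "Y \<in> R1 \<union> R2" "Y \<subseteq> X" using ov unfolding over_def by blast
        have "Y \<notin> R2"
        proof
          assume "Y \<in> R2"
          then obtain Z where "Z \<in> T - {T1}" "Z \<subseteq> Y" using mr unfolding over_def by blast
          then show False using sep[of X Z] L_elem[of S1 n d X] ms X Y by auto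
        qed
        then show "\<exists>Y\<in>R1. Y \<subseteq> X" using Y by auto
      qed
      moreover have "over S2 R2"
        unfolding over_def
      proof
        fix X assume X: "X \<in> S2"
        then obtain Y where Y: "Y \<in> R1 \<union> R2" "Y \<subseteq> X" using ov unfolding over_def by blast
        obtain Z where Z: "Z \<in> T - {T1}" "Z \<subseteq> X" using ms X unfolding over_def by blast
        have "Y \<notin> R1"
        proof
          assume "Y \<in> R1"
          then have "T1 \<subseteq> X" using mr Y by blast
          then show False using sep[of X Z] L_elem[of S2 n d X] ms X Z by auto
        qed
        then show "\<exists>Y\<in>R2. Y \<subseteq> X" using Y by auto
      qed
      ultimately show "over S1 R1 \<and> over S2 R2" by blast
    qed
    also have "\<dots> \<longleftrightarrow> Lle d (f p) (f q)"
      unfolding pp qq f_def using Lle_iff[OF imgL[OF pA] imgL[OF qA]] by simp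
    finally show ?thesis .
  qed
  have bij: "bij_betw f A (Ideal n d T)" using inj img by (simp add: bij_betw_def)
  have "\<forall>x\<in>A. \<forall>y\<in>A. prod_le (Lle d) (Lle d) x y \<longleftrightarrow> Lle d (f x) (f y)"
    using ord by blast
  with bij have "\<exists>g. bij_betw g A (Ideal n d T) \<and>
      (\<forall>x\<in>A. \<forall>y\<in>A. prod_le (Lle d) (Lle d) x y \<longleftrightarrow> Lle d (g x) (g y))" by blast
  then show ?thesis unfolding poset_iso_def A_def .
qed

end
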